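(* Let $q$ be a prime power and let $R$ be a finite ring containing the field $\mathbb{F}_q$ as a subring. Let $d=\dim_{\mathbb{F}_q}R$ and let $r^*$ be the number of units of $R$. If $B$ is a blocking set of the chain geometry $\Sigma(\mathbb{F}_q,R)$, then \[ \#B\ \ge\ \left\lceil\frac{2q^d-r^*}{q+1}\right\rceil . \]
   Context: All rings are associative with unit element $1\neq 0$, and subrings share the unit. $R^2$ is regarded as a left $R$-module. The projective line $\mathbb{P}(R)$ is the set of all submodules of $R^2$ of the form $R(a,b)$ where $(a\ b)$ is the first row of some invertible $2\times 2$ matrix over $R$. For a field $K\subseteq R$ (as a subring), $\mathbb{P}(K)$ is embedded in $\mathbb{P}(R)$ via $K(a,b)\mapsto R(a,b)$. The chain geometry $\Sigma(K,R)$ has point set $\mathbb{P}(R)$ and its blocks, called chains, are the sets $\mathbb{P}(K)^g$ with $g\in \mathrm{GL}_2(R)$. A blocking set is a set $B$ of points such that every chain contains at least one element of $B$. *)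

theory Defs
  imports Complex_Main "HOL-Computational_Algebra.Primes"
begin

text \<open>2x2 matrices over a ring, written as ((a,b),(c,d)) (rows).\<close>
type_synonym 'a mat2 = "('a \<times> 'a) \<times> ('a \<times> 'a)"

fun mmul2 :: "'a::ring_1 mat2 \<Rightarrow> 'a mat2 \<Rightarrow> 'a mat2" where
  "mmul2 ((a,b),(c,d)) ((e,f),(g,h)) =
     ((a*e + b*g, a*f + b*h), (c*e + d*g, c*f + d*h))"

definition id2 :: "'a::ring_1 mat2" where
  "id2 = ((1,0),(0,1))"

definition entries_in :: "'a mat2 \<Rightarrow> 'a set \<Rightarrow> bool" where
  "entries_in M S \<longleftrightarrow> fst (fst M) \<in> S \<and> snd (fst M) \<in> S \<and> fst (snd M) \<in> S \<and> snd (snd M) \<in> S"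

definition invertible_over :: "'a::ring_1 set \<Rightarrow> 'a mat2 \<Rightarrow> bool" where
  "invertible_over S M \<longleftrightarrow> entries_in M S \<and>
     (\<exists>N. entries_in N S \<and> mmul2 M N = id2 \<and> mmul2 N M = id2)"

abbreviation GL2 :: "'a::ring_1 mat2 set" where
  "GL2 \<equiv> {M. invertible_over UNIV M}"

fun vecmat :: "'a::ring_1 \<times> 'a \<Rightarrow> 'a mat2 \<Rightarrow> 'a \<times> 'a" where
  "vecmat (x,y) ((a,b),(c,d)) = (x*a + y*c, x*b + y*d)"

text \<open>The cyclic left submodule R(a,b) of R^2.\<close>
definition cyc :: "'a::ring_1 \<times> 'a \<Rightarrow> ('a \<times> 'a) set" where
  "cyc v = {(r * fst v, r * snd v) | r. True}"

text \<open>For S = UNIV this is the projective line P(R); for S = K a subfield it is the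
  image of P(K) under the embedding K(a,b) \<mapsto> R(a,b).\<close>
definition proj_line_over :: "'a::ring_1 set \<Rightarrow> ('a \<times> 'a) set set" where
  "proj_line_over S = {cyc (a,b) | a b. \<exists>c d. invertible_over S ((a,b),(c,d))}"

abbreviation proj_line :: "('a::ring_1 \<times> 'a) set set" where
  "proj_line \<equiv> proj_line_over UNIV"

definition point_act :: "('a::ring_1 \<times> 'a) set \<Rightarrow> 'a mat2 \<Rightarrow> ('a \<times> 'a) set" where
  "point_act p g = (\<lambda>v. vecmat v g) ` p"

definition chains :: "'a::ring_1 set \<Rightarrow> ('a \<times> 'a) set set set" where
  "chains K = {(\<lambda>p. point_act p g) ` proj_line_over K | g. g \<in> GL2}"

definition blocking_set :: "'a::ring_1 set \<Rightarrow> ('a \<times> 'a) set set \<Rightarrow> bool" where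
  "blocking_set K B \<longleftrightarrow> B \<subseteq> proj_line \<and> (\<forall>C \<in> chains K. C \<inter> B \<noteq> {})"

definition subfield :: "'a::ring_1 set \<Rightarrow> bool" where
  "subfield K \<longleftrightarrow> 0 \<in> K \<and> 1 \<in> K \<and>
     (\<forall>x\<in>K. \<forall>y\<in>K. x + y \<in> K \<and> x - y \<in> K \<and> x * y \<in> K \<and> x * y = y * x) \<and>
     (\<forall>x\<in>K. x \<noteq> 0 \<longrightarrow> (\<exists>y\<in>K. x * y = 1))"

definition ring_units :: "'a::ring_1 set" where
  "ring_units = {u. \<exists>v. u * v = 1 \<and> v * u = 1}"

end

theory Submission
  imports Defs
begin


lemma mat2_ex: obtains a b c d where "A = ((a,b),(c,d))"
  by (metis prod.exhaust)

lemma mmul2_assoc: "mmul2 (mmul2 A B) C = mmul2 A (mmul2 (B::'a::ring_1 mat2) C)"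
proof -
  obtain a b c d where A: "A = ((a,b),(c,d))" by (rule mat2_ex)
  obtain e f g h where B: "B = ((e,f),(g,h))" by (rule mat2_ex)
  obtain i j k l where C: "C = ((i,j),(k,l))" by (rule mat2_ex)
  show ?thesis unfolding A B C by (simp add: algebra_simps)
qed

lemma vecmat_mmul2: "vecmat (vecmat v A) B = vecmat v (mmul2 A (B::'a::ring_1 mat2))"
proof -
  obtain a b c d where A: "A = ((a,b),(c,d))" by (rule mat2_ex)
  obtain e f g h where B: "B = ((e,f),(g,h))" by (rule mat2_ex)
  obtain x y where v: "v = (x,y)" by (metis prod.exhaust)
  show ?thesis unfolding A B v by (simp add: algebra_simps)
qed

lemma fst_mmul2: "fst (mmul2 A (B::'a::ring_1 mat2)) = vecmat (fst A) B"
proof -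
  obtain a b c d where A: "A = ((a,b),(c,d))" by (rule mat2_ex)
  obtain e f g h where B: "B = ((e,f),(g,h))" by (rule mat2_ex)
  show ?thesis unfolding A B by simp
qed

lemma mmul2_id2_left[simp]: "mmul2 id2 (A::'a::ring_1 mat2) = A"
  by (cases A rule: mat2_ex) (simp add: id2_def)
lemma mmul2_id2_right[simp]: "mmul2 (A::'a::ring_1 mat2) id2 = A"
  by (cases A rule: mat2_ex) (simp add: id2_def)
lemma vecmat_id2[simp]: "vecmat v (id2::'a::ring_1 mat2) = v"
  by (cases v) (simp add: id2_def)

lemma vecmat_scale: "vecmat (r*x, r*y) A = (r * fst (vecmat (x,y) A), r * snd (vecmat (x,y) (A::'a::ring_1 mat2)))"
  by (cases A rule: mat2_ex) (simp add: algebra_simps)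

lemma point_act_cyc: "point_act (cyc v) g = cyc (vecmat v (g::'a::ring_1 mat2))"
proof -
  obtain x y where v: "v = (x,y)" by (metis prod.exhaust)
  show ?thesis unfolding v point_act_def cyc_def
  proof (auto simp: vecmat_scale image_def)
    fix r show "\<exists>a b. (\<exists>r. a = r * x \<and> b = r * y) \<and>
               (r * fst (vecmat (x, y) g), r * snd (vecmat (x, y) g)) = vecmat (a, b) g"
      by (rule exI[of _ "r*x"], rule exI[of _ "r*y"]) (auto simp add: vecmat_scale)
  qed
qed

lemma point_act_comp: "point_act (point_act p g) h = point_act p (mmul2 g (h::'a::ring_1 mat2))"
  unfolding point_act_def by (simp add: image_image vecmat_mmul2)

lemma point_act_id[simp]: "point_act p (id2::'a::ring_1 mat2) = p"
  unfolding point_act_def by simp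

lemma GL2_iff: "(M::'a::ring_1 mat2) \<in> GL2 \<longleftrightarrow> (\<exists>N. mmul2 M N = id2 \<and> mmul2 N M = id2)"
  by (simp add: invertible_over_def entries_in_def)

definition minv :: "'a::ring_1 mat2 \<Rightarrow> 'a mat2" where
  "minv M = (SOME N. mmul2 M N = id2 \<and> mmul2 N M = id2)"

lemma minv: assumes "M \<in> GL2"
  shows "mmul2 M (minv M) = id2" "mmul2 (minv M) M = id2" "minv M \<in> GL2"
proof -
  have "\<exists>N. mmul2 M N = id2 \<and> mmul2 N M = id2" using assms GL2_iff by blast
  then have "mmul2 M (minv M) = id2 \<and> mmul2 (minv M) M = id2"
    unfolding minv_def by (rule someI_ex)
  then show "mmul2 M (minv M) = id2" "mmul2 (minv M) M = id2" "minv M \<in> GL2"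
    using GL2_iff by blast+
qed

lemma GL2_mult: assumes "M \<in> GL2" "N \<in> GL2" shows "mmul2 M N \<in> (GL2::'a::ring_1 mat2 set)"
proof -
  have "mmul2 (mmul2 M N) (mmul2 (minv N) (minv M)) = mmul2 M (mmul2 (mmul2 N (minv N)) (minv M))"
    by (simp only: mmul2_assoc)
  also have "\<dots> = id2" by (simp add: minv(1)[OF assms(1)] minv(1)[OF assms(2)])
  finally have 1: "mmul2 (mmul2 M N) (mmul2 (minv N) (minv M)) = id2" .
  have "mmul2 (mmul2 (minv N) (minv M)) (mmul2 M N) = mmul2 (minv N) (mmul2 (mmul2 (minv M) M) N)"
    by (simp only: mmul2_assoc)
  also have "\<dots> = id2" by (simp add: minv(2)[OF assms(1)] minv(2)[OF assms(2)])
  finally have 2: "mmul2 (mmul2 (minv N) (minv M)) (mmul2 M N) = id2" .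
  show ?thesis using 1 2 GL2_iff by blast
qed

lemma id2_GL2: "(id2::'a::ring_1 mat2) \<in> GL2"
  using GL2_iff by fastforce

lemma proj_line_eq: "(proj_line::('a::ring_1\<times>'a) set set) = (\<lambda>H. cyc (fst H)) ` GL2"
  unfolding proj_line_over_def by (auto simp: image_def)




lemma P_act: assumes "p \<in> proj_line" "g \<in> GL2" shows "point_act p g \<in> (proj_line::('a::ring_1\<times>'a) set set)"
proof -
  obtain H where H: "H \<in> GL2" "p = cyc (fst H)" using assms(1) proj_line_eq by blast
  have "point_act p g = cyc (fst (mmul2 H g))" by (simp add: H point_act_cyc fst_mmul2)
  then show ?thesis using GL2_mult[OF H(1) assms(2)] proj_line_eq by auto
qed

lemma P_trans: assumes "p \<in> proj_line" "p' \<in> proj_line"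
  shows "\<exists>M\<in>(GL2::'a::ring_1 mat2 set). point_act p M = p'"
proof -
  obtain H where H: "H \<in> GL2" "p = cyc (fst H)" using assms(1) proj_line_eq by blast
  obtain H' where H': "H' \<in> GL2" "p' = cyc (fst H')" using assms(2) proj_line_eq by blast
  let ?M = "mmul2 (minv H) H'"
  have "point_act p ?M = cyc (fst (mmul2 H ?M))" by (simp add: H point_act_cyc fst_mmul2)
  also have "\<dots> = p'" by (simp add: H' minv(1)[OF H(1)] flip: mmul2_assoc[of H])
  finally show ?thesis using GL2_mult[OF minv(3)[OF H(1)] H'(1)] by blast
qed

lemma stab_le: assumes "p \<in> proj_line" "b \<in> proj_line" "p' \<in> proj_line" "b' \<in> proj_line"
  shows "card {g\<in>(GL2::('a::{ring_1,finite}) mat2 set). point_act p g = b}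
       \<le> card {g\<in>(GL2::'a mat2 set). point_act p' g = b'}"
proof -
  obtain M where M: "M \<in> GL2" "point_act p' M = p" using P_trans assms by blast
  obtain N where N: "N \<in> GL2" "point_act b N = b'" using P_trans assms by blast
  define f where "f = (\<lambda>g. mmul2 M (mmul2 g N))"
  have bk: "g = mmul2 (minv M) (mmul2 (f g) (minv N))" for g
  proof -
    have "mmul2 (minv M) (mmul2 (f g) (minv N)) = mmul2 (mmul2 (minv M) M) (mmul2 g (mmul2 N (minv N)))"
      unfolding f_def by (simp add: mmul2_assoc)
    then show ?thesis by (simp add: minv(1)[OF N(1)] minv(2)[OF M(1)])
  qed
  have "inj f" by (metis bk injI)
  moreover have "f ` {g\<in>GL2. point_act p g = b} \<subseteq> {g\<in>GL2. point_act p' g = b'}"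
  proof
    fix x assume "x \<in> f ` {g\<in>GL2. point_act p g = b}"
    then obtain g where g: "g \<in> GL2" "point_act p g = b" "x = f g" by blast
    have "x \<in> GL2" using g(1,3) M(1) N(1) GL2_mult unfolding f_def by blast
    moreover have "point_act p' x = b'"
      using g M N by (simp add: f_def flip: point_act_comp)
    ultimately show "x \<in> {g\<in>GL2. point_act p' g = b'}" by blast
  qed
  ultimately show ?thesis
    using card_inj_on_le[of f "{g\<in>GL2. point_act p g = b}" "{g\<in>GL2. point_act p' g = b'}"]
      inj_on_subset[of f UNIV] by auto
qed

lemma stab_eq: assumes "p \<in> proj_line" "b \<in> proj_line" "p' \<in> proj_line" "b' \<in> proj_line"
  shows "card {g\<in>(GL2::('a::{ring_1,finite}) mat2 set). point_act p g = b}
       = card {g\<in>(GL2::'a mat2 set). point_act p' g = b'}"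
  using stab_le[OF assms] stab_le[OF assms(3,4,1,2)] by (rule antisym)




lemma C0_sub: "proj_line_over K \<subseteq> (proj_line::('a::ring_1\<times>'a) set set)"
  unfolding proj_line_over_def invertible_over_def entries_in_def by blast

lemma cyc_norm1: assumes "a*y = 1" "y*a = 1" shows "cyc (a,b) = cyc (1::'a::ring_1, y*b)"
proof -
  have e1: "r*a*(y*b) = r*b" for r
  proof -
    have "r*a*(y*b) = r*(a*y)*b" by (simp add: mult.assoc)
    then show ?thesis using assms(1) by simp
  qed
  have e2: "s*y*a = s" for s
  proof -
    have "s*y*a = s*(y*a)" by (simp add: mult.assoc)
    then show ?thesis using assms(2) by simp
  qed
  show ?thesis unfolding cyc_def
  proof (rule set_eqI, rule iffI)
    fix v assume "v \<in> {(r * fst (a, b), r * snd (a, b)) |r. True}"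
    then obtain r where "v = (r*a, r*b)" by auto
    then have "v = ((r*a) * fst (1::'a, y*b), (r*a) * snd (1::'a, y*b))" using e1 by simp
    then show "v \<in> {(r * fst (1::'a, y*b), r * snd (1::'a, y*b)) |r. True}" by blast
  next
    fix v assume "v \<in> {(r * fst (1::'a, y*b), r * snd (1::'a, y*b)) |r. True}"
    then obtain s where "v = (s, s*(y*b))" by auto
    then have "v = ((s*y) * fst (a, b), (s*y) * snd (a, b))" using e2 by (simp add: mult.assoc)
    then show "v \<in> {(r * fst (a, b), r * snd (a, b)) |r. True}" by blast
  qed
qed

lemma cyc_norm0: "g*b = 1 \<Longrightarrow> cyc (0,b) = cyc (0::'a::ring_1, 1)"
  unfolding cyc_def
proof (auto)
  fix s assume "g*b = 1"
  then show "\<exists>r. s = r * b"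
    by (intro exI[of _ "s*g"]) (simp add: mult.assoc)
qed

lemma C0_card: fixes K :: "'a::{ring_1,finite} set" assumes "subfield K"
  shows "card (proj_line_over K) \<le> card K + 1"
proof -
  have "proj_line_over K \<subseteq> insert (cyc (0,1)) ((\<lambda>t. cyc (1,t)) ` K)"
  proof
    fix p assume "p \<in> proj_line_over K"
    then obtain a b c d where p: "p = cyc (a,b)" and inv: "invertible_over K ((a,b),(c,d))"
      unfolding proj_line_over_def by blast
    then obtain e f g h where N: "entries_in ((e,f),(g,h)) K"
      "mmul2 ((a,b),(c,d)) ((e,f),(g,h)) = id2"
      unfolding invertible_over_def by (metis mat2_ex)
    have ab: "a \<in> K" "b \<in> K" using inv unfolding invertible_over_def entries_in_def by auto
    have gK: "g \<in> K" using N(1) unfolding entries_in_def by auto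
    have eq1: "a*e + b*g = 1" using N(2) by (simp add: id2_def)
    show "p \<in> insert (cyc (0,1)) ((\<lambda>t. cyc (1,t)) ` K)"
    proof (cases "a = 0")
      case True
      then have "b*g = 1" using eq1 by simp
      then have "g*b = 1" using assms gK ab unfolding subfield_def by metis
      then show ?thesis using p True cyc_norm0 by blast
    next
      case False
      then obtain y where y: "y \<in> K" "a*y = 1" using assms ab unfolding subfield_def by blast
      then have "y*a = 1" using assms ab unfolding subfield_def by metis
      then have "p = cyc (1, y*b)" using p y cyc_norm1 by blast
      moreover have "y*b \<in> K" using assms y ab unfolding subfield_def by blast
      ultimately show ?thesis by blast
    qed
  qed
  moreover have "finite K" using assms by simp
  ultimately have "card (proj_line_over K) \<le> card (insert (cyc (0,1)) ((\<lambda>t. cyc (1::'a,t)) ` K))"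
    by (intro card_mono) auto
  also have "\<dots> \<le> card ((\<lambda>t. cyc (1::'a,t)) ` K) + 1" by (simp add: card_insert_le_m1 card_insert_if)
  also have "\<dots> \<le> card K + 1" using card_image_le[OF \<open>finite K\<close>] by simp
  finally show ?thesis .
qed




lemma cyc_mem: "(x,y) \<in> cyc (a,b) \<longleftrightarrow> (\<exists>r. x = r*a \<and> y = r*b)"
  unfolding cyc_def by auto

lemma cyc_self: "(a,b) \<in> cyc (a::'a::ring_1,b)"
  unfolding cyc_mem by (rule exI[of _ 1]) simp

lemma affine_in_P: "cyc (1::'a::ring_1, x) \<in> proj_line"
proof -
  have "((1,x),(0,1)) \<in> (GL2::'a mat2 set)"
    unfolding GL2_iff by (rule exI[of _ "((1,-x),(0,1))"]) (simp add: id2_def)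
  then show ?thesis unfolding proj_line_eq by force
qed

lemma nonaff_in_P: "cyc (n::'a::ring_1, 1) \<in> proj_line"
proof -
  have "((n,1),(1,0)) \<in> (GL2::'a mat2 set)"
    unfolding GL2_iff by (rule exI[of _ "((0,1),(1,-n))"]) (simp add: id2_def)
  then show ?thesis unfolding proj_line_eq by force
qed

lemma P_lower: "card (UNIV::'a::{ring_1,finite} set) + (card (UNIV::'a set) - card (ring_units::'a set))
   \<le> card (proj_line::('a\<times>'a) set set)"
proof -
  define A where "A = (\<lambda>x. cyc (1::'a, x)) ` UNIV"
  define N where "N = (\<lambda>n. cyc (n::'a, 1)) ` (- ring_units)"
  have injA: "inj (\<lambda>x. cyc (1::'a, x))"
  proof (rule injI)
    fix x y :: 'a assume "cyc (1, x) = cyc (1, y)"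
    then have "(1,y) \<in> cyc (1,x)" using cyc_self by metis
    then show "x = y" unfolding cyc_mem by auto
  qed
  have injN: "inj (\<lambda>n. cyc (n::'a, 1))"
  proof (rule injI)
    fix x y :: 'a assume "cyc (x, 1) = cyc (y, 1)"
    then have "(y,1) \<in> cyc (x,1)" using cyc_self by metis
    then show "x = y" unfolding cyc_mem by auto
  qed
  have disj: "A \<inter> N = {}"
  proof (rule ccontr)
    assume "A \<inter> N \<noteq> {}"
    then obtain x n where n: "n \<notin> ring_units" and eq: "cyc (1::'a, x) = cyc (n, 1)"
      unfolding A_def N_def by auto
    have "(n,1) \<in> cyc (1,x)" using eq cyc_self by metis
    then have "n*x = 1" unfolding cyc_mem by auto
    moreover have "(1,x) \<in> cyc (n,1)" using eq cyc_self by metis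
    then have "x*n = 1" unfolding cyc_mem by auto
    ultimately have "n \<in> ring_units" unfolding ring_units_def by blast
    then show False using n by blast
  qed
  have "card A = card (UNIV::'a set)" unfolding A_def using card_image[OF injA] by simp
  moreover have "card N = card (UNIV::'a set) - card (ring_units::'a set)"
    unfolding N_def using card_image[OF inj_on_subset[OF injN]] card_Diff_subset[of "ring_units::'a set" UNIV]
    by (simp add: Compl_eq_Diff_UNIV)
  moreover have "card (A \<union> N) = card A + card N" using disj by (simp add: card_Un_disjoint)
  moreover have "A \<union> N \<subseteq> proj_line" unfolding A_def N_def using affine_in_P nonaff_in_P by blast
  ultimately show ?thesis using card_mono[of proj_line "A \<union> N"] by simp
qed




lemma P_bound: fixes K :: "'a::{ring_1,finite} set"
  assumes "subfield K" "blocking_set K B"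
  shows "card (proj_line::('a\<times>'a) set set) \<le> (card K + 1) * card B"
proof -
  define G where "G = (GL2::'a mat2 set)"
  define P where "P = (proj_line::('a\<times>'a) set set)"
  define C0 where "C0 = proj_line_over K"
  define e where "e = cyc (fst (id2::'a mat2))"
  have eP: "e \<in> P" unfolding e_def P_def proj_line_eq using id2_GL2 by blast
  define s where "s = card {g\<in>G. point_act e g = e}"
  have BP: "B \<subseteq> P" using assms(2) unfolding blocking_set_def P_def by blast
  have C0P: "C0 \<subseteq> P" unfolding C0_def P_def by (rule C0_sub)
  have st: "card {g\<in>G. point_act p g = b} = s" if "p \<in> P" "b \<in> P" for p b
    unfolding s_def G_def using stab_eq that eP P_def by blast
  have spos: "s > 0"
  proof -
    have "id2 \<in> {g\<in>G. point_act e g = e}" using id2_GL2 G_def by simp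
    then show ?thesis unfolding s_def by (subst card_gt_0_iff) (intro conjI; (blast | simp))
  qed
  have "G = (\<Union>x\<in>P. {g\<in>G. point_act e g = x})"
    using P_act eP unfolding G_def P_def by blast
  then have "card G = card (\<Union>x\<in>P. {g\<in>G. point_act e g = x})" by (rule arg_cong)
  also have "\<dots> = (\<Sum>x\<in>P. card {g\<in>G. point_act e g = x})"
    by (rule card_UN_disjoint) auto
  also have "\<dots> = card P * s" using st eP by simp
  finally have c1: "card G = card P * s" .
  have "G \<subseteq> (\<Union>pb\<in>C0\<times>B. {g\<in>G. point_act (fst pb) g = snd pb})"
  proof
    fix g assume g: "g \<in> G"
    then have "(\<lambda>p. point_act p g) ` C0 \<in> chains K" unfolding chains_def C0_def G_def by blast
    then have "(\<lambda>p. point_act p g) ` C0 \<inter> B \<noteq> {}" using assms(2) unfolding blocking_set_def by blast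
    then obtain p where "p \<in> C0" "point_act p g \<in> B" by blast
    then show "g \<in> (\<Union>pb\<in>C0\<times>B. {g\<in>G. point_act (fst pb) g = snd pb})" using g by force
  qed
  then have "card G \<le> card (\<Union>pb\<in>C0\<times>B. {g\<in>G. point_act (fst pb) g = snd pb})"
    by (intro card_mono) auto
  also have "\<dots> \<le> (\<Sum>pb\<in>C0\<times>B. card {g\<in>G. point_act (fst pb) g = snd pb})"
    by (rule card_UN_le) simp
  also have "\<dots> = (\<Sum>pb\<in>C0\<times>B. s)"
  proof (rule sum.cong)
    fix pb assume "pb \<in> C0 \<times> B"
    then have "fst pb \<in> P" "snd pb \<in> P" using C0P BP by auto
    then show "card {g\<in>G. point_act (fst pb) g = snd pb} = s" by (rule st)
  qed simp
  also have "\<dots> = card C0 * card B * s" by (simp add: card_cartesian_product)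
  finally have "card P * s \<le> card C0 * card B * s" using c1 by simp
  then have "card P \<le> card C0 * card B" using spos by simp
  also have "\<dots> \<le> (card K + 1) * card B" using C0_card[OF assms(1)] C0_def by (metis mult_le_mono1)
  finally show ?thesis unfolding P_def .
qed

theorem mainTheorem2:
  fixes K :: "'a::{ring_1, finite} set"
    and B :: "('a \<times> 'a) set set"
    and q d :: nat
  assumes "\<exists>p k. prime p \<and> k \<ge> 1 \<and> q = p ^ k"
    and "subfield K"
    and "card K = q"
    and "card (UNIV :: 'a set) = q ^ d"
    and "blocking_set K B"
  shows "int (card B) \<ge>
           ceiling ((2 * real q ^ d - real (card (ring_units :: 'a set))) / (real q + 1))"
proof -
  have "card (ring_units::'a set) \<le> card (UNIV::'a set)" by (simp add: card_mono)
  then have "2 * real q ^ d - real (card (ring_units :: 'a set))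
      = real (card (UNIV::'a set) + (card (UNIV::'a set) - card (ring_units::'a set)))"
    using assms(4) by (simp add: of_nat_diff)
  also have "\<dots> \<le> real (card (proj_line::('a\<times>'a) set set))" using P_lower by (simp only: of_nat_le_iff)
  also have "\<dots> \<le> real ((q + 1) * card B)" using P_bound[OF assms(2,5)] assms(3) by (simp only: of_nat_le_iff)
  finally have "(2 * real q ^ d - real (card (ring_units :: 'a set))) / (real q + 1) \<le> real (card B)"
    by (simp add: divide_le_eq algebra_simps add_pos_nonneg)
  then show ?thesis by (simp add: ceiling_le_iff)
qed


end
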